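(* Let $N,k\ge 10$. Let $Z$ be a finite collection of $Nk$-grid unions such that the sets $D+[-10k,10k]^d$, $D\in Z$, are pairwise disjoint and all contained in a larger $Nk$-grid union $C$. Then $C\setminus\bigcup_{D\in Z}D$ can be tiled by almost $k$-boxes.
   Context: A set $B\subseteq\mathbb{Z}^d$ is an $M$-grid union if there exist $C\subseteq M\mathbb{Z}^d$ and $\gamma\in\mathbb{Z}^d$ with $B=\gamma+C+[1,M]^d$ and both $B$ and $\mathbb{Z}^d\setminus B$ connected (in the graph with edges $\{\alpha,\alpha\pm\epsilon^i\}$). A box is a product of integer intervals; an almost $k$-box is a box all of whose side lengths lie between $k$ and $2k$ and at most one of whose side lengths differs from $k$. Tiling means partitioning into translates of such boxes. *)

theory Defs
  imports Main
begin

text \<open>Points of Z^d are functions 'd \<Rightarrow> int for a finite index type 'd (d = CARD('d)).\<close>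

definition grid_adj :: "('d \<Rightarrow> int) \<Rightarrow> ('d \<Rightarrow> int) \<Rightarrow> bool" where
  "grid_adj a b \<longleftrightarrow> (\<exists>i. \<bar>a i - b i\<bar> = 1 \<and> (\<forall>j. j \<noteq> i \<longrightarrow> a j = b j))"

definition grid_connected :: "('d \<Rightarrow> int) set \<Rightarrow> bool" where
  "grid_connected S \<longleftrightarrow>
     (\<forall>x\<in>S. \<forall>y\<in>S. (\<lambda>a b. a \<in> S \<and> b \<in> S \<and> grid_adj a b)\<^sup>*\<^sup>* x y)"

definition grid_union :: "int \<Rightarrow> ('d::finite \<Rightarrow> int) set \<Rightarrow> bool" where
  "grid_union M B \<longleftrightarrow>
     (\<exists>C \<gamma>. (\<forall>c\<in>C. \<forall>i. M dvd c i) \<and>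
            B = {x. \<exists>c\<in>C. \<forall>i. 1 \<le> x i - \<gamma> i - c i \<and> x i - \<gamma> i - c i \<le> M}) \<and>
     grid_connected B \<and> grid_connected (UNIV - B)"

definition box :: "('d \<Rightarrow> int) \<Rightarrow> ('d \<Rightarrow> int) \<Rightarrow> ('d \<Rightarrow> int) set" where
  "box a b = {x. \<forall>i. a i \<le> x i \<and> x i \<le> b i}"

definition almost_box :: "int \<Rightarrow> ('d \<Rightarrow> int) set \<Rightarrow> bool" where
  "almost_box k P \<longleftrightarrow>
     (\<exists>a b. P = box a b \<and> (\<forall>i. k \<le> b i - a i + 1 \<and> b i - a i + 1 \<le> 2 * k) \<and>
        (\<forall>i j. b i - a i + 1 \<noteq> k \<and> b j - a j + 1 \<noteq> k \<longrightarrow> i = j))"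

text \<open>Tiling by translates of almost k-boxes (a translate of an almost k-box is again one).\<close>
definition tiled_by_almost_boxes :: "int \<Rightarrow> ('d \<Rightarrow> int) set \<Rightarrow> bool" where
  "tiled_by_almost_boxes k S \<longleftrightarrow>
     (\<exists>T. (\<forall>P\<in>T. almost_box k P) \<and>
          (\<forall>P\<in>T. \<forall>Q\<in>T. P \<noteq> Q \<longrightarrow> P \<inter> Q = {}) \<and> \<Union>T = S)"

definition thicken :: "int \<Rightarrow> ('d \<Rightarrow> int) set \<Rightarrow> ('d \<Rightarrow> int) set" where
  "thicken r D = {x. \<exists>y\<in>D. \<forall>i. \<bar>x i - y i\<bar> \<le> r}"

end

theory Submission
  imports Defs
begin


definition sameC :: "int \<Rightarrow> ('d \<Rightarrow> int) \<Rightarrow> ('d \<Rightarrow> int) \<Rightarrow> ('d \<Rightarrow> int) \<Rightarrow> bool" where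
  "sameC k g x y \<longleftrightarrow> (\<forall>i. (x i - g i) div k = (y i - g i) div k)"

definition closedS :: "int \<Rightarrow> ('d \<Rightarrow> int) \<Rightarrow> ('d \<Rightarrow> int) set \<Rightarrow> bool" where
  "closedS k g S \<longleftrightarrow> (\<forall>x\<in>S. \<forall>y. sameC k g x y \<longrightarrow> y \<in> S)"

lemma div_pred_eq:
  fixes u k :: int assumes "k > 0" "u mod k \<noteq> 0"
  shows "(u - 1) div k = u div k"
proof -
  have u: "u = k * (u div k) + u mod k" by simp
  have "0 < u mod k" using assms pos_mod_sign[of k u] by linarith
  moreover have "u mod k < k" using assms by simp
  ultimately have z: "(u mod k - 1) div k = 0" by (simp add: div_pos_pos_trivial)
  have "u - 1 = (u mod k - 1) + (u div k) * k" by simp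
  then have "(u - 1) div k = ((u mod k - 1) + (u div k) * k) div k" by (rule arg_cong)
  also have "\<dots> = (u div k) + (u mod k - 1) div k" by (rule div_mult_self1) (use assms in simp)
  finally have "(u - 1) div k = (u div k) + (u mod k - 1) div k" .
  then show ?thesis using z by simp
qed

lemma div_block_eq:
  fixes u m M :: int assumes "M > 0"
  shows "(0 \<le> u - M * m \<and> u - M * m < M) \<longleftrightarrow> u div M = m"
proof
  assume h: "0 \<le> u - M * m \<and> u - M * m < M"
  have z: "(u - M*m) div M = 0" using h by (simp add: div_pos_pos_trivial)
  have "u = (u - M*m) + m * M" by simp
  then have "u div M = m + (u - M*m) div M" using assms by (metis div_mult_self1 less_irrefl)
  then show "u div M = m" using z by simp
next
  assume "u div M = m"
  then show "0 \<le> u - M * m \<and> u - M * m < M"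
    using assms by (metis add_diff_cancel_left' minus_mult_div_eq_mod mult.commute pos_mod_bound pos_mod_sign)
qed

lemma grid_union_closed:
  assumes "grid_union (N * k) B" "N > 0" "k > 0"
  shows "\<exists>g. closedS k g B"
proof -
  obtain C \<gamma> where C: "\<forall>c\<in>C. \<forall>i. (N*k) dvd c i"
    and B: "B = {x. \<exists>c\<in>C. \<forall>i. 1 \<le> x i - \<gamma> i - c i \<and> x i - \<gamma> i - c i \<le> N*k}"
    using assms(1) unfolding grid_union_def by blast
  have Mpos: "N * k > 0" using assms by simp
  have key: "(1 \<le> x - g - c \<and> x - g - c \<le> N*k) \<longleftrightarrow> (x - g - 1) div (N*k) = c div (N*k)"
    if dv: "(N*k) dvd c" for x g c :: int
  proof -
    obtain m where cm: "c = N*k*m" using dv by (auto simp: dvd_def)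
    have "(1 \<le> x - g - c \<and> x - g - c \<le> N*k) \<longleftrightarrow> (0 \<le> (x - g - 1) - (N*k) * m \<and> (x - g - 1) - (N*k)*m < N*k)"
      using cm by auto
    also have "\<dots> \<longleftrightarrow> (x - g - 1) div (N*k) = m" using div_block_eq[OF Mpos] by blast
    moreover have "c div (N*k) = m" using cm Mpos by (metis nonzero_mult_div_cancel_left less_irrefl)
    ultimately show ?thesis by simp
  qed
  have dd: "(u::int) div (N*k) = (u div k) div N" for u
  proof -
    have "u div (k*N) = u div k div N" by (rule zdiv_zmult2_eq) (use assms in simp)
    then show ?thesis by (simp add: mult.commute)
  qed
  show ?thesis
  proof (rule exI[of _ "\<lambda>i. \<gamma> i + 1"], unfold closedS_def, intro ballI allI impI)
    fix x y assume xB: "x \<in> B" and s: "sameC k (\<lambda>i. \<gamma> i + 1) x y"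
    from xB obtain c where c: "c \<in> C" "\<forall>i. 1 \<le> x i - \<gamma> i - c i \<and> x i - \<gamma> i - c i \<le> N*k"
      using B by blast
    have "\<forall>i. 1 \<le> y i - \<gamma> i - c i \<and> y i - \<gamma> i - c i \<le> N*k"
    proof
      fix i
      have "(x i - \<gamma> i - 1) div (N*k) = c i div (N*k)" using key c C by blast
      moreover have "(x i - (\<gamma> i + 1)) div k = (y i - (\<gamma> i + 1)) div k" using s unfolding sameC_def by blast
      ultimately have "(y i - \<gamma> i - 1) div (N*k) = c i div (N*k)" using dd by (simp add: diff_diff_eq)
      then show "1 \<le> y i - \<gamma> i - c i \<and> y i - \<gamma> i - c i \<le> N*k" using key c C by blast
    qed
    then show "y \<in> B" using B c by blast
  qed
qed

lemma tiled_empty: "tiled_by_almost_boxes k {}"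
  unfolding tiled_by_almost_boxes_def by (rule exI[of _ "{}"]) simp

lemma almost_box_nonempty: assumes "almost_box k P" "k > 0" shows "P \<noteq> {}"
proof -
  obtain a b where ab: "P = box a b" "\<forall>i. k \<le> b i - a i + 1" using assms unfolding almost_box_def by blast
  have "\<forall>i. a i \<le> b i" using ab(2) assms(2) by (metis add_le_cancel_right diff_ge_0_iff_ge order_trans zero_less_iff_neq_zero less_le zle_add1_eq_le)
  then have "a \<in> P" using ab unfolding box_def by simp
  then show ?thesis by blast
qed

lemma tiled_Union:
  assumes "\<forall>S\<in>F. tiled_by_almost_boxes k S"
    and "\<forall>S\<in>F. \<forall>S'\<in>F. S \<noteq> S' \<longrightarrow> S \<inter> S' = {}"
  shows "tiled_by_almost_boxes k (\<Union>F)"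
proof -
  have "\<forall>S\<in>F. \<exists>T. (\<forall>P\<in>T. almost_box k P) \<and>
          (\<forall>P\<in>T. \<forall>Q\<in>T. P \<noteq> Q \<longrightarrow> P \<inter> Q = {}) \<and> \<Union>T = S"
    using assms(1) unfolding tiled_by_almost_boxes_def by blast
  then obtain TT where TT: "\<And>S. S\<in>F \<Longrightarrow> (\<forall>P\<in>TT S. almost_box k P) \<and>
          (\<forall>P\<in>TT S. \<forall>Q\<in>TT S. P \<noteq> Q \<longrightarrow> P \<inter> Q = {}) \<and> \<Union>(TT S) = S"
    by (metis (no_types, lifting) bchoice)
  show ?thesis unfolding tiled_by_almost_boxes_def
  proof (rule exI[of _ "\<Union>S\<in>F. TT S"], intro conjI ballI impI)
    fix P assume "P \<in> (\<Union>S\<in>F. TT S)" 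
    then obtain S where "S \<in> F" "P \<in> TT S" by blast
    then show "almost_box k P" using TT by blast
  next
    fix P Q assume P: "P \<in> (\<Union>S\<in>F. TT S)" and Q: "Q \<in> (\<Union>S\<in>F. TT S)" and ne: "P \<noteq> Q"
    from P obtain S where S: "S \<in> F" "P \<in> TT S" by blast
    from Q obtain S' where S': "S' \<in> F" "Q \<in> TT S'" by blast
    show "P \<inter> Q = {}"
    proof (cases "S = S'")
      case True then show ?thesis using TT[OF S(1)] S S' ne by blast
    next
      case False
      have "P \<subseteq> S" using TT[OF S(1)] S(2) by blast
      moreover have "Q \<subseteq> S'" using TT[OF S'(1)] S'(2) by blast
      ultimately show ?thesis using assms(2) S(1) S'(1) False by blast
    qed
  next
    show "\<Union>(\<Union>S\<in>F. TT S) = \<Union>F"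
    proof
      show "\<Union>(\<Union>S\<in>F. TT S) \<subseteq> \<Union>F" using TT by blast
      show "\<Union>F \<subseteq> \<Union>(\<Union>S\<in>F. TT S)"
      proof
        fix x assume "x \<in> \<Union>F"
        then obtain S where S: "S \<in> F" "x \<in> S" by blast
        have "\<Union>(TT S) = S" using TT[OF S(1)] by blast
        then obtain P where "P \<in> TT S" "x \<in> P" using S(2) by blast
        then show "x \<in> \<Union>(\<Union>S\<in>F. TT S)" using S(1) by blast
      qed
    qed
  qed
qed

lemma tiled_Un:
  assumes "tiled_by_almost_boxes k A" "tiled_by_almost_boxes k B" "A \<inter> B = {}"
  shows "tiled_by_almost_boxes k (A \<union> B)"
proof (cases "A = B")
  case True then show ?thesis using assms by simp
next
  case False
  have 1: "\<forall>S\<in>{A,B}. tiled_by_almost_boxes k S" using assms(1,2) by simp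
  have 2: "\<forall>S\<in>{A,B}. \<forall>S'\<in>{A,B}. S \<noteq> S' \<longrightarrow> S \<inter> S' = {}" using assms(3) by blast
  show ?thesis using tiled_Union[OF 1 2] by simp
qed



lemma line_const:
  fixes f :: "int \<Rightarrow> bool"
  assumes "m \<le> n" "\<forall>c. m < c \<and> c \<le> n \<longrightarrow> f (c - 1) = f c"
  shows "f m = f n"
  using assms
proof (induction n rule: int_ge_induct)
  case base then show ?case by simp
next
  case (step i)
  have h: "\<forall>c. m < c \<and> c \<le> i \<longrightarrow> f (c - 1) = f c" using step.prems by auto
  have "f m = f i" using step.IH h by blast
  have "m < i + 1" using step.hyps by simp
  then have e: "f ((i+1) - 1) = f (i+1)" using step.prems by blast
  have "(i + 1) - 1 = i" by simp
  then have "f i = f (i + 1)" using e by simp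
  then show ?case using \<open>f m = f i\<close> by simp
qed

lemma mod0_gap:
  fixes c c' h k :: int
  assumes "k > 0" "(c - h) mod k = 0" "(c' - h) mod k = 0" "c < c'"
  shows "c + k \<le> c'"
proof -
  have e1: "c - h = k * ((c - h) div k)" using assms(2) by (metis add.right_neutral div_mult_mod_eq mult.commute)
  have e2: "c' - h = k * ((c' - h) div k)" using assms(3) by (metis add.right_neutral div_mult_mod_eq mult.commute)
  have "c' - c = k * ((c' - h) div k - (c - h) div k)" using e1 e2 by (simp add: right_diff_distrib)
  moreover have "(c' - h) div k - (c - h) div k \<ge> 1"
  proof (rule ccontr)
    assume "\<not> ?thesis"
    then have "(c' - h) div k - (c - h) div k \<le> 0" by simp
    then have "k * ((c' - h) div k - (c - h) div k) \<le> 0" using assms(1) by (simp add: mult_nonneg_nonpos)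
    then show False using \<open>c' - c = _\<close> assms(4) by simp
  qed
  ultimately have "c' - c \<ge> k * 1" using assms(1) by (metis mult_le_cancel_left_pos)
  then show ?thesis by simp
qed

context
  fixes k :: int and g g' :: "'d \<Rightarrow> int" and a :: 'd and P Q :: "('d \<Rightarrow> int) set"
  assumes kpos: "k > 0" and gg: "\<And>i. i \<noteq> a \<Longrightarrow> g i = g' i"
    and cP: "closedS k g P" and cQ: "closedS k g' Q"
    and thick: "\<And>x t. x \<in> P \<Longrightarrow> \<bar>t\<bar> \<le> k \<Longrightarrow> x(a := x a + t) \<in> Q"
begin

definition offa where "offa x y \<longleftrightarrow> (\<forall>i. i \<noteq> a \<longrightarrow> (x i - g i) div k = (y i - g i) div k)"
definition Bd where "Bd x = {p. (x(a := p - 1) \<in> P) \<noteq> (x(a := p) \<in> P)}"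
definition Kc where "Kc x = Bd x \<union> {p. (p - g' a) mod k = 0 \<and> (\<forall>q\<in>Bd x. k \<le> \<bar>p - q\<bar>)}"
definition tileR where "tileR x y \<longleftrightarrow> offa x y \<and> (\<forall>c\<in>Kc x. (c \<le> x a) = (c \<le> y a))"

lemma memP_offa: assumes "offa x y" shows "(x(a:=p) \<in> P) = (y(a:=p) \<in> P)"
proof -
  have s1: "sameC k g (x(a:=p)) (y(a:=p))" using assms unfolding offa_def sameC_def by auto
  have s2: "sameC k g (y(a:=p)) (x(a:=p))" using assms unfolding offa_def sameC_def by auto
  show ?thesis using cP s1 s2 unfolding closedS_def by blast
qed

lemma memQ_offa: assumes "offa x y" shows "(x(a:=p) \<in> Q) = (y(a:=p) \<in> Q)"
proof -
  have s1: "sameC k g' (x(a:=p)) (y(a:=p))" using assms gg unfolding offa_def sameC_def by (metis fun_upd_apply)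
  have s2: "sameC k g' (y(a:=p)) (x(a:=p))" using assms gg unfolding offa_def sameC_def by (metis fun_upd_apply)
  show ?thesis using cQ s1 s2 unfolding closedS_def by blast
qed

lemma Bd_offa: "offa x y \<Longrightarrow> Bd x = Bd y"
  unfolding Bd_def using memP_offa by blast

lemma Kc_offa: "offa x y \<Longrightarrow> Kc x = Kc y"
  unfolding Kc_def using Bd_offa by simp

lemma offa_sym: "offa x y \<Longrightarrow> offa y x" unfolding offa_def by metis
lemma offa_trans: "offa x y \<Longrightarrow> offa y z \<Longrightarrow> offa x z" unfolding offa_def by metis

lemma step_mod:
  fixes S :: "('d \<Rightarrow> int) set" and h :: "'d \<Rightarrow> int"
  assumes "closedS k h S" "(x(a := p - 1) \<in> S) \<noteq> (x(a := p) \<in> S)"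
  shows "(p - h a) mod k = 0"
proof (rule ccontr)
  assume "(p - h a) mod k \<noteq> 0"
  then have e: "(p - h a - 1) div k = (p - h a) div k" using div_pred_eq kpos by blast
  have s1: "sameC k h (x(a:=p-1)) (x(a:=p))" unfolding sameC_def using e by (simp add: algebra_simps)
  have s2: "sameC k h (x(a:=p)) (x(a:=p-1))" unfolding sameC_def using e by (simp add: algebra_simps)
  show False using assms s1 s2 unfolding closedS_def by blast
qed

lemma Bd_mod: "p \<in> Bd x \<Longrightarrow> (p - g a) mod k = 0"
  unfolding Bd_def using step_mod[OF cP] by blast

lemma Qbd_Kc:
  assumes "(x(a := p - 1) \<in> Q) \<noteq> (x(a := p) \<in> Q)"
  shows "p \<in> Kc x"
proof -
  have m: "(p - g' a) mod k = 0" using step_mod[OF cQ assms] .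
  have "k \<le> \<bar>p - q\<bar>" if q: "q \<in> Bd x" for q
  proof -
    obtain r where r: "r = q - 1 \<or> r = q" "x(a := r) \<in> P" using q unfolding Bd_def by auto
    obtain s where s: "s = p - 1 \<or> s = p" "x(a := s) \<notin> Q" using assms by auto
    have "\<not> \<bar>s - r\<bar> \<le> k"
    proof
      assume h: "\<bar>s - r\<bar> \<le> k"
      have "(x(a := r))(a := (x(a := r)) a + (s - r)) \<in> Q" using thick[OF r(2) h] .
      then have "x(a := s) \<in> Q" by simp
      then show False using s by simp
    qed
    then show ?thesis using r(1) s(1) by auto
  qed
  then show ?thesis unfolding Kc_def using m by blast
qed

lemma cut_gap:
  assumes "c \<in> Kc x" "c' \<in> Kc x" "c < c'"
  shows "c + k \<le> c'"
proof -
  consider "c \<in> Bd x" "c' \<in> Bd x" | "c \<in> Bd x" "c' \<notin> Bd x" | "c \<notin> Bd x" "c' \<in> Bd x" | "c \<notin> Bd x" "c' \<notin> Bd x" by blast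
  then show ?thesis
  proof cases
    case 1 then show ?thesis using mod0_gap[OF kpos Bd_mod Bd_mod assms(3)] by blast
  next
    case 2 then have "k \<le> \<bar>c' - c\<bar>" using assms(2) unfolding Kc_def by blast
    then show ?thesis using assms(3) by simp
  next
    case 3 then have "k \<le> \<bar>c - c'\<bar>" using assms(1) unfolding Kc_def by blast
    then show ?thesis using assms(3) by simp
  next
    case 4 then have "(c - g' a) mod k = 0" "(c' - g' a) mod k = 0" using assms(1,2) unfolding Kc_def by auto
    then show ?thesis using mod0_gap[OF kpos _ _ assms(3)] by (meson mod0_gap[OF kpos _ _ assms(3)])
  qed
qed

lemma window: "\<exists>c\<in>Kc x. m \<le> c \<and> c \<le> m + 2*k - 1"
proof -
  define u where "u = m - g' a + k - 1"
  define p1 where "p1 = g' a + k * (u div k)"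
  have du: "k * (u div k) = u - u mod k" by (simp add: minus_mod_eq_mult_div)
  have "0 \<le> u mod k" "u mod k < k" using kpos by simp_all
  then have p1b: "m \<le> p1" "p1 \<le> m + k - 1" unfolding p1_def using du u_def by simp_all
  have p1m: "(p1 - g' a) mod k = 0" unfolding p1_def by simp
  have "p1 + k - g' a = k * (u div k + 1)" unfolding p1_def by (simp add: algebra_simps)
  then have p2m: "(p1 + k - g' a) mod k = 0" by simp
  show ?thesis
  proof (rule ccontr)
    assume no: "\<not> ?thesis"
    have "p1 \<notin> Kc x" using no p1b kpos by auto
    then obtain q1 where q1: "q1 \<in> Bd x" "\<bar>p1 - q1\<bar> < k" using p1m unfolding Kc_def by force
    have "p1 + k \<notin> Kc x" using no p1b kpos by auto
    then obtain q2 where q2: "q2 \<in> Bd x" "\<bar>p1 + k - q2\<bar> < k" using p2m unfolding Kc_def by force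
    have "q1 \<in> Kc x" "q2 \<in> Kc x" using q1 q2 unfolding Kc_def by auto
    then have "\<not> (m \<le> q1 \<and> q1 \<le> m + 2*k - 1)" "\<not> (m \<le> q2 \<and> q2 \<le> m + 2*k - 1)" using no by auto
    then have lo: "q1 < m" and hi: "q2 > m + 2*k - 1" using q1 q2 p1b by auto
    have "q1 + 2*k < q2" using lo hi by simp
    then have "q1 + 3*k \<le> q2"
    proof -
      have m1: "(q1 - g a) mod k = 0" "(q2 - g a) mod k = 0" using Bd_mod q1(1) q2(1) by auto
      have "q1 + 2*k - g a = (q1 - g a) + 2 * k" by simp
      then have m3: "(q1 + 2*k - g a) mod k = 0" using m1(1) by (metis mod_mult_self1)
      show ?thesis using mod0_gap[OF kpos m3 m1(2) \<open>q1 + 2*k < q2\<close>] by simp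
    qed
    moreover have "q2 - q1 < 3*k" using q1 q2 by simp
    ultimately show False by simp
  qed
qed


lemma lo_hi_exist:
  obtains lo hi where "lo \<in> Kc x" "lo \<le> x a" "\<And>c. c \<in> Kc x \<Longrightarrow> c \<le> x a \<Longrightarrow> c \<le> lo"
    "hi \<in> Kc x" "x a < hi" "\<And>c. c \<in> Kc x \<Longrightarrow> x a < c \<Longrightarrow> hi \<le> c"
proof -
  define L where "L = {c\<in>Kc x. x a - 2*k < c \<and> c \<le> x a}"
  define H where "H = {c\<in>Kc x. x a < c \<and> c \<le> x a + 2*k}"
  have fL: "finite L" unfolding L_def by (rule finite_subset[of _ "{x a - 2*k <.. x a}"]) auto
  have fH: "finite H" unfolding H_def by (rule finite_subset[of _ "{x a <.. x a + 2*k}"]) auto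
  obtain c1 where c1: "c1 \<in> Kc x" "x a - 2*k + 1 \<le> c1" "c1 \<le> x a - 2*k + 1 + 2*k - 1" using window by blast
  obtain c2 where c2: "c2 \<in> Kc x" "x a + 1 \<le> c2" "c2 \<le> x a + 1 + 2*k - 1" using window by blast
  have "c1 \<in> L" using c1 unfolding L_def by simp
  then have neL: "L \<noteq> {}" by blast
  have "c2 \<in> H" using c2 unfolding H_def by simp
  then have neH: "H \<noteq> {}" by blast
  define lo where "lo = Max L"
  define hi where "hi = Min H"
  have loL: "lo \<in> L" unfolding lo_def using fL neL by simp
  have hiH: "hi \<in> H" unfolding hi_def using fH neH by simp
  show ?thesis
  proof (rule that)
    show "lo \<in> Kc x" "lo \<le> x a" using loL unfolding L_def by auto
    show "hi \<in> Kc x" "x a < hi" using hiH unfolding H_def by auto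
  next
    fix c assume c: "c \<in> Kc x" "c \<le> x a"
    show "c \<le> lo"
    proof (cases "x a - 2*k < c")
      case True then have "c \<in> L" using c unfolding L_def by auto
      then show ?thesis unfolding lo_def using fL by simp
    next
      case False then show ?thesis using loL unfolding L_def by auto
    qed
  next
    fix c assume c: "c \<in> Kc x" "x a < c"
    show "hi \<le> c"
    proof (cases "c \<le> x a + 2*k")
      case True then have "c \<in> H" using c unfolding H_def by auto
      then show ?thesis unfolding hi_def using fH by simp
    next
      case False then show ?thesis using hiH unfolding H_def by auto
    qed
  qed
qed

lemma tile_almost_box: "almost_box k {y. tileR x y}"
proof -
  obtain lo hi where lh: "lo \<in> Kc x" "lo \<le> x a" "\<And>c. c \<in> Kc x \<Longrightarrow> c \<le> x a \<Longrightarrow> c \<le> lo"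
    "hi \<in> Kc x" "x a < hi" "\<And>c. c \<in> Kc x \<Longrightarrow> x a < c \<Longrightarrow> hi \<le> c"
    using lo_hi_exist by blast
  define A where "A = (\<lambda>i. if i = a then lo else g i + k * ((x i - g i) div k))"
  define B where "B = (\<lambda>i. if i = a then hi - 1 else g i + k * ((x i - g i) div k) + k - 1)"
  have gap1: "lo + k \<le> hi" using cut_gap[OF lh(1) lh(4)] lh(2) lh(5) by simp
  have gap2: "hi \<le> lo + 2*k"
  proof -
    obtain c where c: "c \<in> Kc x" "lo + 1 \<le> c" "c \<le> lo + 1 + 2*k - 1" using window by blast
    have "x a < c" using lh(3)[OF c(1)] c(2) by force
    then have "hi \<le> c" using lh(6) c(1) by blast
    then show ?thesis using c(3) by simp
  qed
  have eq: "{y. tileR x y} = box A B"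
  proof (intro set_eqI iffI)
    fix y assume "y \<in> {y. tileR x y}"
    then have o: "offa x y" and cc: "\<forall>c\<in>Kc x. (c \<le> x a) = (c \<le> y a)" unfolding tileR_def by auto
    have "A i \<le> y i \<and> y i \<le> B i" for i
    proof (cases "i = a")
      case True
      have "lo \<le> y a" using cc lh(1,2) by blast
      moreover have "\<not> hi \<le> y a" using cc lh(4,5) by force
      ultimately show ?thesis using True unfolding A_def B_def by simp
    next
      case False
      have "(y i - g i) div k = (x i - g i) div k" using o False unfolding offa_def by simp
      then have "0 \<le> (y i - g i) - k * ((x i - g i) div k) \<and> (y i - g i) - k * ((x i - g i) div k) < k"
        using div_block_eq[OF kpos] by blast
      then show ?thesis using False unfolding A_def B_def by simp
    qed
    then show "y \<in> box A B" unfolding box_def by simp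
  next
    fix y assume "y \<in> box A B"
    then have yb: "\<And>i. A i \<le> y i \<and> y i \<le> B i" unfolding box_def by simp
    have o: "offa x y" unfolding offa_def
    proof (intro allI impI)
      fix i assume ia: "i \<noteq> a"
      have "0 \<le> (y i - g i) - k * ((x i - g i) div k) \<and> (y i - g i) - k * ((x i - g i) div k) < k"
        using yb[of i] ia unfolding A_def B_def by simp
      then show "(x i - g i) div k = (y i - g i) div k" using div_block_eq[OF kpos] by metis
    qed
    have ya: "lo \<le> y a" "y a \<le> hi - 1" using yb[of a] unfolding A_def B_def by simp_all
    have "\<forall>c\<in>Kc x. (c \<le> x a) = (c \<le> y a)"
    proof
      fix c assume c: "c \<in> Kc x"
      show "(c \<le> x a) = (c \<le> y a)"
      proof (cases "c \<le> x a")
        case True then show ?thesis using lh(3)[OF c] ya by simp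
      next
        case False then show ?thesis using lh(6)[OF c] ya by simp
      qed
    qed
    then show "y \<in> {y. tileR x y}" using o unfolding tileR_def by simp
  qed
  show ?thesis unfolding almost_box_def
  proof (intro exI conjI allI impI)
    show "{y. tileR x y} = box A B" by (rule eq)
  next
    fix i show "k \<le> B i - A i + 1" "B i - A i + 1 \<le> 2 * k"
      unfolding A_def B_def using gap1 gap2 kpos by auto
  next
    fix i j assume "B i - A i + 1 \<noteq> k \<and> B j - A j + 1 \<noteq> k"
    then have "i = a" "j = a" unfolding A_def B_def by (auto split: if_splits)
    then show "i = j" by simp
  qed
qed

lemma tileR_sub:
  assumes x: "x \<in> Q - P" and t: "tileR x y"
  shows "y \<in> Q - P"
proof -
  have o: "offa x y" and cc: "\<forall>c\<in>Kc x. (c \<le> x a) = (c \<le> y a)" using t unfolding tileR_def by auto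
  have nocut: "\<forall>c. min (x a) (y a) < c \<and> c \<le> max (x a) (y a) \<longrightarrow> c \<notin> Kc x"
    using cc by force
  have lineP: "(x(a := x a) \<in> P) = (x(a := y a) \<in> P)"
  proof -
    have st: "\<forall>c. min (x a) (y a) < c \<and> c \<le> max (x a) (y a) \<longrightarrow> (x(a := c - 1) \<in> P) = (x(a := c) \<in> P)"
      using nocut unfolding Kc_def Bd_def by blast
    show ?thesis
    proof (cases "x a \<le> y a")
      case True
      show ?thesis using line_const[of "x a" "y a" "\<lambda>p. x(a := p) \<in> P"] True st by auto
    next
      case False
      show ?thesis using line_const[of "y a" "x a" "\<lambda>p. x(a := p) \<in> P"] False st by auto
    qed
  qed
  have lineQ: "(x(a := x a) \<in> Q) = (x(a := y a) \<in> Q)"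
  proof -
    have st: "\<forall>c. min (x a) (y a) < c \<and> c \<le> max (x a) (y a) \<longrightarrow> (x(a := c - 1) \<in> Q) = (x(a := c) \<in> Q)"
      using nocut Qbd_Kc by blast
    show ?thesis
    proof (cases "x a \<le> y a")
      case True
      show ?thesis using line_const[of "x a" "y a" "\<lambda>p. x(a := p) \<in> Q"] True st by auto
    next
      case False
      show ?thesis using line_const[of "y a" "x a" "\<lambda>p. x(a := p) \<in> Q"] False st by auto
    qed
  qed
  have "(x(a := y a) \<in> P) = (y(a := y a) \<in> P)" using memP_offa[OF o] .
  moreover have "(x(a := y a) \<in> Q) = (y(a := y a) \<in> Q)" using memQ_offa[OF o] .
  ultimately show ?thesis using x lineP lineQ by simp
qed

lemma tileR_eq: assumes "tileR x z" shows "{y. tileR x y} = {y. tileR z y}"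
proof -
  have o: "offa x z" and cc: "\<forall>c\<in>Kc x. (c \<le> x a) = (c \<le> z a)" using assms unfolding tileR_def by auto
  have K: "Kc x = Kc z" using Kc_offa[OF o] .
  have "tileR x y \<longleftrightarrow> tileR z y" for y
    unfolding tileR_def using K cc offa_trans[OF o] offa_trans[OF offa_sym[OF o]] by auto
  then show ?thesis by simp
qed

lemma strip_tiled: "tiled_by_almost_boxes k (Q - P)"
  unfolding tiled_by_almost_boxes_def
proof (rule exI[of _ "{{y. tileR x y} | x. x \<in> Q - P}"], intro conjI ballI impI)
  fix T assume "T \<in> {{y. tileR x y} | x. x \<in> Q - P}"
  then show "almost_box k T" using tile_almost_box by blast
next
  fix T1 T2 assume T1: "T1 \<in> {{y. tileR x y} | x. x \<in> Q - P}" and T2: "T2 \<in> {{y. tileR x y} | x. x \<in> Q - P}"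
    and ne: "T1 \<noteq> T2"
  from T1 obtain x1 where x1: "T1 = {y. tileR x1 y}" by blast
  from T2 obtain x2 where x2: "T2 = {y. tileR x2 y}" by blast
  show "T1 \<inter> T2 = {}"
  proof (rule ccontr)
    assume "T1 \<inter> T2 \<noteq> {}"
    then obtain z where "tileR x1 z" "tileR x2 z" using x1 x2 by blast
    then have "T1 = T2" using x1 x2 tileR_eq by metis
    then show False using ne by simp
  qed
next
  have refl: "tileR x x" for x unfolding tileR_def offa_def by simp
  show "\<Union>{{y. tileR x y} | x. x \<in> Q - P} = Q - P"
  proof
    show "\<Union>{{y. tileR x y} | x. x \<in> Q - P} \<subseteq> Q - P" using tileR_sub by blast
    show "Q - P \<subseteq> \<Union>{{y. tileR x y} | x. x \<in> Q - P}" using refl by blast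
  qed
qed

end


definition gJ :: "('d \<Rightarrow> int) \<Rightarrow> ('d \<Rightarrow> int) \<Rightarrow> 'd set \<Rightarrow> ('d \<Rightarrow> int)" where
  "gJ gC gD J = (\<lambda>i. if i \<in> J then gC i else gD i)"
definition XJ :: "int \<Rightarrow> ('d \<Rightarrow> int) set \<Rightarrow> 'd set \<Rightarrow> ('d \<Rightarrow> int) set" where
  "XJ k D J = {y. \<exists>z\<in>D. \<forall>i. (i \<notin> J \<longrightarrow> y i = z i) \<and> \<bar>y i - z i\<bar> \<le> 2*k}"
definition RJ :: "int \<Rightarrow> ('d \<Rightarrow> int) \<Rightarrow> ('d \<Rightarrow> int) \<Rightarrow> ('d \<Rightarrow> int) set \<Rightarrow> 'd set \<Rightarrow> ('d \<Rightarrow> int) set" where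
  "RJ k gC gD D J = {x. \<exists>y\<in>XJ k D J. sameC k (gJ gC gD J) y x}"

lemma RJ_closed: "closedS k (gJ gC gD J) (RJ k gC gD D J)"
  unfolding closedS_def
proof (intro ballI allI impI)
  fix x x' assume x: "x \<in> RJ k gC gD D J" and s: "sameC k (gJ gC gD J) x x'"
  then obtain y where y: "y \<in> XJ k D J" "sameC k (gJ gC gD J) y x" unfolding RJ_def by blast
  then have "sameC k (gJ gC gD J) y x'" using s unfolding sameC_def by simp
  then show "x' \<in> RJ k gC gD D J" using y(1) unfolding RJ_def by blast
qed

lemma RJ_sup: assumes "k > 0" shows "D \<subseteq> RJ k gC gD D J"
proof
  fix x assume x: "x \<in> D"
  have "\<forall>i. (i \<notin> J \<longrightarrow> x i = x i) \<and> \<bar>x i - x i\<bar> \<le> 2*k" using assms by simp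
  then have "x \<in> XJ k D J" unfolding XJ_def using x by blast
  then show "x \<in> RJ k gC gD D J" unfolding RJ_def sameC_def by blast
qed

lemma RJ_empty: assumes "closedS k gD D" shows "RJ k gC gD D {} \<subseteq> D"
proof
  fix x assume "x \<in> RJ k gC gD D {}"
  then obtain y where y: "y \<in> XJ k D {}" "sameC k (gJ gC gD {}) y x" unfolding RJ_def by blast
  from y(1) have "y \<in> D" unfolding XJ_def
  proof -
    from y(1) obtain z where "z \<in> D" "\<forall>i. y i = z i" unfolding XJ_def by auto
    then show ?thesis by (metis ext)
  qed
  moreover have "sameC k gD y x" using y(2) unfolding gJ_def by simp
  ultimately show "x \<in> D" using assms unfolding closedS_def by blast
qed

lemma RJ_thick:
  assumes "k > 0" "a \<notin> J" "x \<in> RJ k gC gD D J" "\<bar>t\<bar> \<le> k"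
  shows "x(a := x a + t) \<in> RJ k gC gD D (insert a J)"
proof -
  obtain y where y: "y \<in> XJ k D J" "sameC k (gJ gC gD J) y x" using assms(3) unfolding RJ_def by blast
  obtain z where z: "z \<in> D" "\<forall>i. (i \<notin> J \<longrightarrow> y i = z i) \<and> \<bar>y i - z i\<bar> \<le> 2*k" using y(1) unfolding XJ_def by blast
  define y' where "y' = y(a := x a + t)"
  have ya: "(y a - gJ gC gD J a) div k = (x a - gJ gC gD J a) div k" using y(2) unfolding sameC_def by blast
  have "\<bar>y a - x a\<bar> < k"
  proof -
    let ?h = "gJ gC gD J a"
    have "0 \<le> (y a - ?h) - k * ((x a - ?h) div k) \<and> (y a - ?h) - k * ((x a - ?h) div k) < k"
      using div_block_eq[OF assms(1)] ya by blast
    moreover have "0 \<le> (x a - ?h) - k * ((x a - ?h) div k) \<and> (x a - ?h) - k * ((x a - ?h) div k) < k"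
      using div_block_eq[OF assms(1)] by blast
    ultimately show ?thesis by linarith
  qed
  moreover have "y a = z a" using z assms(2) by blast
  ultimately have "\<bar>y' a - z a\<bar> \<le> 2*k" unfolding y'_def using assms(4) by simp
  then have "\<forall>i. (i \<notin> insert a J \<longrightarrow> y' i = z i) \<and> \<bar>y' i - z i\<bar> \<le> 2*k"
    using z(2) unfolding y'_def by auto
  then have "y' \<in> XJ k D (insert a J)" unfolding XJ_def using z(1) by blast
  moreover have "sameC k (gJ gC gD (insert a J)) y' (x(a := x a + t))"
    using y(2) unfolding sameC_def y'_def gJ_def by (auto split: if_splits)
  ultimately show ?thesis unfolding RJ_def by blast
qed

lemma RJ_mono:
  assumes "k > 0" "a \<notin> J"
  shows "RJ k gC gD D J \<subseteq> RJ k gC gD D (insert a J)"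
proof
  fix x assume "x \<in> RJ k gC gD D J"
  from RJ_thick[OF assms this, of 0] show "x \<in> RJ k gC gD D (insert a J)" using assms(1) by simp
qed

lemma RJ_thicken:
  assumes "k > 0"
  shows "RJ k gC gD D J \<subseteq> thicken (3*k) D"
proof
  fix x assume "x \<in> RJ k gC gD D J"
  then obtain y where y: "y \<in> XJ k D J" "sameC k (gJ gC gD J) y x" unfolding RJ_def by blast
  obtain z where z: "z \<in> D" "\<forall>i. (i \<notin> J \<longrightarrow> y i = z i) \<and> \<bar>y i - z i\<bar> \<le> 2*k" using y(1) unfolding XJ_def by blast
  have "\<bar>x i - z i\<bar> \<le> 3*k" for i
  proof -
    let ?h = "gJ gC gD J i"
    have ya: "(y i - ?h) div k = (x i - ?h) div k" using y(2) unfolding sameC_def by blast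
    have "0 \<le> (y i - ?h) - k * ((x i - ?h) div k) \<and> (y i - ?h) - k * ((x i - ?h) div k) < k"
      using div_block_eq[OF assms(1)] ya by blast
    moreover have "0 \<le> (x i - ?h) - k * ((x i - ?h) div k) \<and> (x i - ?h) - k * ((x i - ?h) div k) < k"
      using div_block_eq[OF assms(1)] by blast
    ultimately have "\<bar>y i - x i\<bar> < k" by linarith
    then show ?thesis using z(2) by (smt (verit))
  qed
  then show "x \<in> thicken (3*k) D" unfolding thicken_def using z(1) by blast
qed

lemma RJ_tiled:
  assumes "k > 0" "closedS k gD D" "finite J"
  shows "tiled_by_almost_boxes k (RJ k gC gD D J - D)"
  using assms(3)
proof (induction J rule: finite_induct)
  case empty
  have e: "RJ k gC gD D {} - D = {}" using RJ_empty[OF assms(2)] by blast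
  show ?case by (subst e) (rule tiled_empty)
next
  case (insert a J)
  have sub: "RJ k gC gD D J \<subseteq> RJ k gC gD D (insert a J)" using RJ_mono[OF assms(1) insert(2)] .
  have eq: "RJ k gC gD D (insert a J) - D = (RJ k gC gD D J - D) \<union> (RJ k gC gD D (insert a J) - RJ k gC gD D J)"
    using sub RJ_sup[OF assms(1), of D gC gD J] by blast
  have t2: "tiled_by_almost_boxes k (RJ k gC gD D (insert a J) - RJ k gC gD D J)"
  proof (rule strip_tiled[where g="gJ gC gD J" and g'="gJ gC gD (insert a J)" and a=a])
    show "k > 0" by (rule assms(1))
    show "\<And>i. i \<noteq> a \<Longrightarrow> gJ gC gD J i = gJ gC gD (insert a J) i" unfolding gJ_def by simp
    show "closedS k (gJ gC gD J) (RJ k gC gD D J)" by (rule RJ_closed)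
    show "closedS k (gJ gC gD (insert a J)) (RJ k gC gD D (insert a J))" by (rule RJ_closed)
    show "\<And>x t. x \<in> RJ k gC gD D J \<Longrightarrow> \<bar>t\<bar> \<le> k \<Longrightarrow> x(a := x a + t) \<in> RJ k gC gD D (insert a J)"
      using RJ_thick[OF assms(1) insert(2)] by blast
  qed
  show ?case unfolding eq by (rule tiled_Un[OF insert(3) t2]) blast
qed

lemma closed_tiled:
  assumes "k > 0" "closedS k g S"
  shows "tiled_by_almost_boxes k S"
proof -
  have "tiled_by_almost_boxes k (S - {})"
  proof (rule strip_tiled[where g=g and g'=g and a=undefined])
    show "k > 0" by (rule assms(1))
    show "closedS k g {}" unfolding closedS_def by simp
  qed (use assms in auto)
  then show ?thesis by simp
qed

lemma thicken_mono: assumes "r \<le> r'" shows "thicken r D \<subseteq> thicken r' D"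
proof
  fix x assume "x \<in> thicken r D"
  then obtain y where "y \<in> D" "\<forall>i. \<bar>x i - y i\<bar> \<le> r" unfolding thicken_def by blast
  then have "y \<in> D" "\<forall>i. \<bar>x i - y i\<bar> \<le> r'" using assms by (auto intro: order_trans)
  then show "x \<in> thicken r' D" unfolding thicken_def by blast
qed

lemma thicken_self: assumes "r \<ge> 0" shows "D \<subseteq> thicken r D"
proof
  fix x assume "x \<in> D"
  moreover have "\<forall>i. \<bar>x i - x i\<bar> \<le> r" using assms by simp
  ultimately show "x \<in> thicken r D" unfolding thicken_def by blast
qed

theorem proposition6p3:
  fixes N k :: int and Z :: "('d::finite \<Rightarrow> int) set set" and C :: "('d \<Rightarrow> int) set"
  assumes "N \<ge> 10" and "k \<ge> 10"
    and "finite Z"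
    and "\<forall>D\<in>Z. grid_union (N * k) D"
    and "\<forall>D\<in>Z. \<forall>D'\<in>Z. D \<noteq> D' \<longrightarrow> thicken (10 * k) D \<inter> thicken (10 * k) D' = {}"
    and "grid_union (N * k) C"
    and "\<forall>D\<in>Z. thicken (10 * k) D \<subseteq> C"
  shows "tiled_by_almost_boxes k (C - \<Union>Z)"
proof -
  have kpos: "k > 0" and Npos: "N > 0" using assms(1,2) by simp_all
  obtain gC where gC: "closedS k gC C" using grid_union_closed[OF assms(6) Npos kpos] by blast
  have "\<forall>D\<in>Z. \<exists>g. closedS k g D" using grid_union_closed[OF _ Npos kpos] assms(4) by blast
  then have "\<exists>gD. \<forall>D\<in>Z. closedS k (gD D) D" by (rule bchoice)
  then obtain gD where gD0: "\<forall>D\<in>Z. closedS k (gD D) D" by blast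
  then have gD: "\<And>D. D \<in> Z \<Longrightarrow> closedS k (gD D) D" by blast
  define Rf where "Rf D = RJ k gC (gD D) D UNIV" for D
  have Rf_closed: "closedS k gC (Rf D)" for D
    using RJ_closed[of k gC "gD D" UNIV D] unfolding Rf_def gJ_def by simp
  have Rf_sup: "D \<subseteq> Rf D" for D unfolding Rf_def by (rule RJ_sup[OF kpos])
  have Rf_th: "Rf D \<subseteq> thicken (10*k) D" for D
    using RJ_thicken[OF kpos, of gC "gD D" D UNIV] thicken_mono[of "3*k" "10*k" D] kpos
    unfolding Rf_def by auto
  have Rf_C: "D \<in> Z \<Longrightarrow> Rf D \<subseteq> C" for D using Rf_th assms(7) by blast
  have Dth: "D \<subseteq> thicken (10*k) D" for D :: "('d \<Rightarrow> int) set" using thicken_self[of "10*k" D] kpos by simp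
  have disj: "D \<in> Z \<Longrightarrow> D' \<in> Z \<Longrightarrow> D \<noteq> D' \<Longrightarrow> Rf D \<inter> Rf D' = {}" for D D'
    using Rf_th[of D] Rf_th[of D'] assms(5) by blast
  have disjD: "D \<in> Z \<Longrightarrow> D' \<in> Z \<Longrightarrow> D \<noteq> D' \<Longrightarrow> Rf D \<inter> D' = {}" for D D'
    using Rf_th[of D] Dth[of D'] assms(5) by blast
  define S0 where "S0 = C - \<Union>(Rf ` Z)"
  have S0c: "closedS k gC S0" unfolding closedS_def
  proof (intro ballI allI impI)
    fix x y assume x: "x \<in> S0" and s: "sameC k gC x y"
    have s': "sameC k gC y x" using s unfolding sameC_def by metis
    have "y \<in> C" using gC x s unfolding S0_def closedS_def by blast
    moreover have "y \<notin> Rf D" if "D \<in> Z" for D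
      using Rf_closed[of D] s' x that unfolding S0_def closedS_def by blast
    ultimately show "y \<in> S0" unfolding S0_def by blast
  qed
  define F where "F = insert S0 ((\<lambda>D. Rf D - D) ` Z)"
  have Ft: "\<forall>S\<in>F. tiled_by_almost_boxes k S"
  proof
    fix S assume "S \<in> F"
    then consider "S = S0" | D where "D \<in> Z" "S = Rf D - D" unfolding F_def by blast
    then show "tiled_by_almost_boxes k S"
    proof cases
      case 1 then show ?thesis using closed_tiled[OF kpos S0c] by simp
    next
      case 2 then show ?thesis using RJ_tiled[OF kpos gD[OF 2(1)], of UNIV gC] unfolding Rf_def by simp
    qed
  qed
  have Fd: "\<forall>S\<in>F. \<forall>S'\<in>F. S \<noteq> S' \<longrightarrow> S \<inter> S' = {}"
  proof (intro ballI impI)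
    fix S S' assume S: "S \<in> F" and S': "S' \<in> F" and ne: "S \<noteq> S'"
    have a1: "S0 \<inter> (Rf D - D) = {}" if "D \<in> Z" for D
    proof -
      have "Rf D \<subseteq> \<Union>(Rf ` Z)" using that by blast
      then show ?thesis unfolding S0_def by blast
    qed
    have a2: "(Rf D - D) \<inter> (Rf D' - D') = {}" if "D \<in> Z" "D' \<in> Z" "Rf D - D \<noteq> Rf D' - D'" for D D'
    proof -
      have "D \<noteq> D'" using that by blast
      then show ?thesis using disj[OF that(1,2)] by blast
    qed
    from S consider "S = S0" | D where "D \<in> Z" "S = Rf D - D" unfolding F_def by blast
    then show "S \<inter> S' = {}"
    proof cases
      case 1
      from S' consider "S' = S0" | D' where "D' \<in> Z" "S' = Rf D' - D'" unfolding F_def by blast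
      then show ?thesis
      proof cases
        case 1 then show ?thesis using \<open>S = S0\<close> ne by simp
      next
        case 2 then show ?thesis using \<open>S = S0\<close> a1[OF 2(1)] by simp
      qed
    next
      case (2 D)
      from S' consider "S' = S0" | D' where "D' \<in> Z" "S' = Rf D' - D'" unfolding F_def by blast
      then show ?thesis
      proof cases
        case 1 then show ?thesis using 2 a1[OF 2(1)] by blast
      next
        case (2 D') then show ?thesis using \<open>D \<in> Z\<close> \<open>S = Rf D - D\<close> a2 ne by simp
      qed
    qed
  qed
  have eq: "C - \<Union>Z = \<Union>F"
  proof
    show "C - \<Union>Z \<subseteq> \<Union>F"
    proof
      fix x assume x: "x \<in> C - \<Union>Z"
      show "x \<in> \<Union>F"
      proof (cases "\<exists>D\<in>Z. x \<in> Rf D")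
        case True
        then obtain D where "D \<in> Z" "x \<in> Rf D" by blast
        then have "x \<in> Rf D - D" using x by blast
        then show ?thesis unfolding F_def using \<open>D \<in> Z\<close> by blast
      next
        case False then have "x \<in> S0" unfolding S0_def using x by blast
        then show ?thesis unfolding F_def by blast
      qed
    qed
    show "\<Union>F \<subseteq> C - \<Union>Z"
    proof
      fix x assume "x \<in> \<Union>F"
      then consider "x \<in> S0" | D where "D \<in> Z" "x \<in> Rf D - D" unfolding F_def by blast
      then show "x \<in> C - \<Union>Z"
      proof cases
        case 1
        then have xC: "x \<in> C" and xR: "\<forall>D\<in>Z. x \<notin> Rf D" unfolding S0_def by auto
        have "x \<notin> D" if "D \<in> Z" for D using Rf_sup[of D] xR that by blast
        then show ?thesis using xC by blast
      next
        case 2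
        have "x \<in> C" using 2 Rf_C by blast
        moreover have "x \<notin> D'" if "D' \<in> Z" for D'
        proof (cases "D' = D")
          case True then show ?thesis using 2 by blast
        next
          case False then show ?thesis using disjD[OF 2(1) that] 2 by blast
        qed
        ultimately show ?thesis by blast
      qed
    qed
  qed
  show ?thesis unfolding eq by (rule tiled_Union[OF Ft Fd])
qed

end
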